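(* Let $k\ge 2$, $D=\{0,1,\dots,k\}$, let $f:D^n\to\mathbb{R}$ be a $k$-submodular function, let $P\subseteq D^n$ be the set of points minimising $f$, and let $P_{\mathrm{int}}=P\cap\{1,\dots,k\}^n$. Then $P_{\mathrm{int}}$ can be described as the set of solutions in $\{1,\dots,k\}^n$ of a conjunction of arbitrary unary constraints and constraints of the forms $(x=a\lor y=b)$ with $a,b\in\{1,\dots,k\}$ and $(x=\pi(y))$ with $\pi$ a permutation of $\{1,\dots,k\}$.
   Context: With $\sqcap,\sqcup$ on $\{0,\dots,k\}$ given by $0\sqcap x=0$, $0\sqcup x=x$, $x\sqcap x=x\sqcup x=x$ and $x\sqcap y=x\sqcup y=0$ for distinct nonzero $x,y$, a function $f$ on $D^n$ is $k$-submodular if $f(X)+f(Y)\ge f(X\sqcap Y)+f(X\sqcup Y)$ for all $X,Y\in D^n$, with operations applied coordinatewise. *)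

theory Defs
  imports Complex_Main
begin

text \<open>Domain D = {0,...,k}; points of D^n are functions nat => nat that are
  bounded by k on the coordinates 0..n-1 and equal 0 elsewhere.\<close>

definition kmeet :: "nat \<Rightarrow> nat \<Rightarrow> nat" where
  "kmeet x y = (if x = y then x else 0)"

definition kjoin :: "nat \<Rightarrow> nat \<Rightarrow> nat" where
  "kjoin x y = (if x = 0 then y else if y = 0 then x else if x = y then x else 0)"

definition dom_pts :: "nat \<Rightarrow> nat \<Rightarrow> (nat \<Rightarrow> nat) set" where
  "dom_pts k n = {x. (\<forall>i<n. x i \<le> k) \<and> (\<forall>i\<ge>n. x i = 0)}"

definition int_pts :: "nat \<Rightarrow> nat \<Rightarrow> (nat \<Rightarrow> nat) set" where
  "int_pts k n = {x. (\<forall>i<n. 1 \<le> x i \<and> x i \<le> k) \<and> (\<forall>i\<ge>n. x i = 0)}"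

definition k_submodular :: "nat \<Rightarrow> nat \<Rightarrow> ((nat \<Rightarrow> nat) \<Rightarrow> real) \<Rightarrow> bool" where
  "k_submodular k n f \<longleftrightarrow>
     (\<forall>X\<in>dom_pts k n. \<forall>Y\<in>dom_pts k n.
        f X + f Y \<ge> f (\<lambda>i. kmeet (X i) (Y i)) + f (\<lambda>i. kjoin (X i) (Y i)))"

definition minimisers :: "nat \<Rightarrow> nat \<Rightarrow> ((nat \<Rightarrow> nat) \<Rightarrow> real) \<Rightarrow> (nat \<Rightarrow> nat) set" where
  "minimisers k n f = {x \<in> dom_pts k n. \<forall>y\<in>dom_pts k n. f x \<le> f y}"

datatype constr =
    Unary nat "nat set"
  | Disj nat nat nat nat
  | PermC nat nat "nat \<Rightarrow> nat"

fun constr_wf :: "nat \<Rightarrow> nat \<Rightarrow> constr \<Rightarrow> bool" where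
  "constr_wf k n (Unary i S) \<longleftrightarrow> i < n"
| "constr_wf k n (Disj i j a b) \<longleftrightarrow> i < n \<and> j < n \<and> a \<in> {1..k} \<and> b \<in> {1..k}"
| "constr_wf k n (PermC i j \<pi>) \<longleftrightarrow> i < n \<and> j < n \<and> bij_betw \<pi> {1..k} {1..k}"

fun constr_sat :: "constr \<Rightarrow> (nat \<Rightarrow> nat) \<Rightarrow> bool" where
  "constr_sat (Unary i S) x \<longleftrightarrow> x i \<in> S"
| "constr_sat (Disj i j a b) x \<longleftrightarrow> x i = a \<or> x j = b"
| "constr_sat (PermC i j \<pi>) x \<longleftrightarrow> x i = \<pi> (x j)"

end

theory Submission
  imports Defs
begin

definition dd :: "(nat\<Rightarrow>nat) \<Rightarrow> (nat\<Rightarrow>nat) \<Rightarrow> (nat\<Rightarrow>nat) \<Rightarrow> (nat\<Rightarrow>nat)" where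
  "dd x y z = (\<lambda>i. if x i = y i then x i else z i)"

lemma decomp:
  assumes cl: "\<And>x y z. x\<in>R \<Longrightarrow> y\<in>R \<Longrightarrow> z\<in>R \<Longrightarrow> dd x y z \<in> R"
    and ne: "R \<noteq> {}"
    and pair: "\<And>i j. i<n \<Longrightarrow> j<n \<Longrightarrow> \<exists>r\<in>R. r i = x i \<and> r j = x j"
  shows "S \<subseteq> {..<n} \<Longrightarrow> \<exists>r\<in>R. \<forall>i\<in>S. r i = x i"
proof (induction "card S" arbitrary: S rule: less_induct)
  case less
  have fin: "finite S" using less.prems finite_subset finite_lessThan by blast
  show ?case
  proof (cases "card S \<ge> 3")
    case False
    then have "card S = 0 \<or> card S = 1 \<or> card S = 2" by linarith
    then show ?thesis
    proof (elim disjE)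
      assume "card S = 0" then have "S = {}" using fin by simp
      then show ?thesis using ne by auto
    next
      assume "card S = 1" then obtain i where "S = {i}" by (auto simp: card_1_singleton_iff)
      then show ?thesis using pair[of i i] less.prems by auto
    next
      assume "card S = 2" then obtain i j where "S = {i,j}" by (auto simp: card_2_iff)
      then show ?thesis using pair[of i j] less.prems by auto
    qed
  next
    case True
    then have "S \<noteq> {}" by auto
    then obtain s1 where s1: "s1 \<in> S" by blast
    have c1: "card (S - {s1}) \<ge> 2" using True s1 fin by (simp add: card_Diff_singleton)
    then have "S - {s1} \<noteq> {}" by (metis card.empty not_numeral_le_zero)
    then obtain s2 where s2: "s2 \<in> S" "s2 \<noteq> s1" by blast
    have "card (S - {s1} - {s2}) \<ge> 1" using c1 s2 fin by (simp add: card_Diff_singleton)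
    then have "S - {s1} - {s2} \<noteq> {}" by (metis card.empty not_one_le_zero)
    then obtain s3 where s3: "s3 \<in> S" "s3 \<noteq> s1" "s3 \<noteq> s2" by blast
    have lt: "\<And>s. s \<in> S \<Longrightarrow> card (S - {s}) < card S" using fin by (meson card_Diff1_less)
    obtain r1 where r1: "r1 \<in> R" "\<forall>i\<in>S-{s1}. r1 i = x i" using less.hyps[OF lt[OF s1]] less.prems by blast
    obtain r2 where r2: "r2 \<in> R" "\<forall>i\<in>S-{s2}. r2 i = x i" using less.hyps[OF lt[OF s2(1)]] less.prems by blast
    obtain r3 where r3: "r3 \<in> R" "\<forall>i\<in>S-{s3}. r3 i = x i" using less.hyps[OF lt[OF s3(1)]] less.prems by blast
    have "\<forall>i\<in>S. dd r1 r2 r3 i = x i"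
    proof
      fix i assume i: "i \<in> S"
      show "dd r1 r2 r3 i = x i"
      proof (cases "i = s1")
        case True then show ?thesis using r2 r3 i s2 s3 by (auto simp: dd_def)
      next
        case False
        note F = False
        show ?thesis
        proof (cases "i = s2")
          case True then show ?thesis using r1 r3 i s2 s3 F by (auto simp: dd_def)
        next
          case False then show ?thesis using r1 r2 i F by (auto simp: dd_def)
        qed
      qed
    qed
    then show ?thesis using cl[OF r1(1) r2(1) r3(1)] by blast
  qed
qed

lemma binary:
  fixes Q :: "(nat\<times>nat) set"
  assumes Qk: "Q \<subseteq> {1..k}\<times>{1..k}"
    and cl: "\<And>c1 e1 c2 e2 c3 e3. (c1,e1)\<in>Q \<Longrightarrow> (c2,e2)\<in>Q \<Longrightarrow> (c3,e3)\<in>Q \<Longrightarrow>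
      (if c1 = c2 then c1 else c3, if e1 = e2 then e1 else e3) \<in> Q"
    and a: "a \<in> fst ` Q" and b: "b \<in> snd ` Q" and nab: "(a,b) \<notin> Q"
  shows "(\<exists>a0\<in>{1..k}. \<exists>b0\<in>{1..k}. a0\<noteq>a \<and> b0\<noteq>b \<and> (\<forall>(c,e)\<in>Q. c=a0 \<or> e=b0))
     \<or> (\<exists>\<pi>. bij_betw \<pi> {1..k} {1..k} \<and> \<pi> b \<noteq> a \<and> (\<forall>(c,e)\<in>Q. c = \<pi> e))"
proof -
  obtain b0 where ab0: "(a,b0) \<in> Q" using a by force
  obtain a0 where a0b: "(a0,b) \<in> Q" using b by force
  have row: "(c, e') \<in> Q" if H: "(c,e1)\<in>Q" "(c,e2)\<in>Q" "e1\<noteq>e2" "e' \<in> snd ` Q" for c e1 e2 e'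
  proof -
    obtain c' where "(c',e') \<in> Q" using H(4) by force
    from cl[OF H(1,2) this] H(3) show ?thesis by simp
  qed
  have col: "(c', e) \<in> Q" if H: "(c1,e)\<in>Q" "(c2,e)\<in>Q" "c1\<noteq>c2" "c' \<in> fst ` Q" for e c1 c2 c'
  proof -
    obtain e' where "(c',e') \<in> Q" using H(4) by force
    from cl[OF H(1,2) this] H(3) show ?thesis by simp
  qed
  have ua: "e = b0" if "(a,e) \<in> Q" for e
    using row[OF ab0 that _ b] nab by blast
  have ub: "c = a0" if "(c,b) \<in> Q" for c
    using col[OF a0b that _ a] nab by blast
  show ?thesis
  proof (cases "\<exists>c e1 e2. (c,e1)\<in>Q \<and> (c,e2)\<in>Q \<and> e1\<noteq>e2")
    case True
    then obtain a1 e1 e2 where A: "(a1,e1)\<in>Q" "(a1,e2)\<in>Q" "e1\<noteq>e2" by blast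
    have a1b: "(a1,b) \<in> Q" using row[OF A b] .
    have "a1 \<noteq> a" using a1b nab by blast
    moreover have "b0 \<noteq> b" using ab0 nab by blast
    moreover have "\<forall>(c,e)\<in>Q. c=a1 \<or> e=b0"
    proof -
      have "c=a1 \<or> e=b0" if ce: "(c,e)\<in>Q" for c e
      proof (cases "c = a1")
        case False
        have "(a1,e) \<in> Q" using row[OF A, of e] ce by force
        from cl[OF ce this ab0] False have "(a,e) \<in> Q" by simp
        then show ?thesis using ua by blast
      qed simp
      then show ?thesis by blast
    qed
    moreover have "a1 \<in> {1..k}" "b0 \<in> {1..k}" using a1b ab0 Qk by auto
    ultimately show ?thesis by blast
  next
    case F1: False
    show ?thesis
    proof (cases "\<exists>e c1 c2. (c1,e)\<in>Q \<and> (c2,e)\<in>Q \<and> c1\<noteq>c2")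
      case True
      then obtain b1 c1 c2 where B: "(c1,b1)\<in>Q" "(c2,b1)\<in>Q" "c1\<noteq>c2" by blast
      have ab1: "(a,b1) \<in> Q" using col[OF B a] .
      have "b1 \<noteq> b" using ab1 nab by blast
      moreover have "a0 \<noteq> a" using a0b nab by blast
      moreover have "\<forall>(c,e)\<in>Q. c=a0 \<or> e=b1"
      proof -
        have "c=a0 \<or> e=b1" if ce: "(c,e)\<in>Q" for c e
        proof (cases "e = b1")
          case False
          have "(c,b1) \<in> Q" using col[OF B, of c] ce by force
          from cl[OF ce this a0b] False have "(c,b) \<in> Q" by simp
          then show ?thesis using ub by blast
        qed simp
        then show ?thesis by blast
      qed
      moreover have "a0 \<in> {1..k}" "b1 \<in> {1..k}" using a0b ab1 Qk by auto
      ultimately show ?thesis by blast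
    next
      case F2: False
      define A where "A = fst ` Q"
      define B where "B = snd ` Q"
      define g where "g e = (SOME c. (c,e) \<in> Q)" for e
      have gQ: "(g e, e) \<in> Q" if eB: "e \<in> B" for e
      proof -
        from eB obtain c where "(c,e) \<in> Q" unfolding B_def by force
        then show ?thesis unfolding g_def by (rule someI)
      qed
      have gu: "g e = c" if ce: "(c,e) \<in> Q" for c e
      proof -
        have "e \<in> B" unfolding B_def using ce by force
        from gQ[OF this] ce F2 show ?thesis by blast
      qed
      have bg: "bij_betw g B A"
        unfolding bij_betw_def
      proof
        show "inj_on g B"
        proof (rule inj_onI)
          fix e e' assume H: "e \<in> B" "e' \<in> B" "g e = g e'"
          have "(g e, e) \<in> Q" "(g e', e') \<in> Q" by (rule gQ[OF H(1)], rule gQ[OF H(2)])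
          then have "(g e, e) \<in> Q" "(g e, e') \<in> Q" using H(3) by simp_all
          then show "e = e'" using F1 by blast
        qed
        show "g ` B = A" unfolding A_def
        proof
          show "g ` B \<subseteq> fst ` Q" using gQ by force
          show "fst ` Q \<subseteq> g ` B"
          proof
            fix c assume "c \<in> fst ` Q"
            then obtain e where "(c,e) \<in> Q" by force
            then show "c \<in> g ` B" using gu unfolding B_def by force
          qed
        qed
      qed
      have AK: "A \<subseteq> {1..k}" "B \<subseteq> {1..k}" using Qk unfolding A_def B_def by force+
      have fAB: "finite A" "finite B" by (meson AK finite_atLeastAtMost finite_subset)+
      have "card A = card B" using bij_betw_same_card[OF bg] by simp
      then have "card ({1..k} - B) = card ({1..k} - A)" using AK fAB by (simp add: card_Diff_subset)
      then obtain h where h: "bij_betw h ({1..k} - B) ({1..k} - A)"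
        using finite_same_card_bij[of "{1..k} - B" "{1..k} - A"] by auto
      define \<pi> where "\<pi> e = (if e \<in> B then g e else h e)" for e
      have "bij_betw \<pi> B A" using bij_betw_cong[of B \<pi> g A] bg \<pi>_def by simp
      moreover have "bij_betw \<pi> ({1..k} - B) ({1..k} - A)" using bij_betw_cong[of "{1..k} - B" \<pi> h "{1..k} - A"] h \<pi>_def by simp
      ultimately have "bij_betw \<pi> (B \<union> ({1..k} - B)) (A \<union> ({1..k} - A))"
        by (intro bij_betw_combine) auto
      moreover have "B \<union> ({1..k} - B) = {1..k}" "A \<union> ({1..k} - A) = {1..k}" using AK by auto
      ultimately have "bij_betw \<pi> {1..k} {1..k}" by simp
      moreover have "\<pi> b \<noteq> a"
      proof -
        have "b \<in> B" using b B_def by simp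
        then have "\<pi> b = a0" using gu[OF a0b] \<pi>_def by simp
        then show ?thesis using a0b nab by auto
      qed
      moreover have "\<forall>(c,e)\<in>Q. c = \<pi> e"
      proof -
        have "c = \<pi> e" if ce: "(c,e) \<in> Q" for c e
        proof -
          have "e \<in> B" unfolding B_def using ce by force
          then show ?thesis using gu[OF ce] \<pi>_def by simp
        qed
        then show ?thesis by blast
      qed
      ultimately show ?thesis by blast
    qed
  qed
qed


lemma meet_dom: "x \<in> dom_pts k n \<Longrightarrow> y \<in> dom_pts k n \<Longrightarrow> (\<lambda>i. kmeet (x i) (y i)) \<in> dom_pts k n"
  by (auto simp: dom_pts_def kmeet_def)

lemma join_dom: "x \<in> dom_pts k n \<Longrightarrow> y \<in> dom_pts k n \<Longrightarrow> (\<lambda>i. kjoin (x i) (y i)) \<in> dom_pts k n"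
  by (auto simp: dom_pts_def kjoin_def)

lemma min_closed:
  assumes ks: "k_submodular k n f" and x: "x \<in> minimisers k n f" and y: "y \<in> minimisers k n f"
  shows "(\<lambda>i. kmeet (x i) (y i)) \<in> minimisers k n f \<and> (\<lambda>i. kjoin (x i) (y i)) \<in> minimisers k n f"
proof -
  let ?m = "\<lambda>i. kmeet (x i) (y i)" and ?j = "\<lambda>i. kjoin (x i) (y i)"
  have xd: "x \<in> dom_pts k n" and yd: "y \<in> dom_pts k n" using x y by (auto simp: minimisers_def)
  have md: "?m \<in> dom_pts k n" and jd: "?j \<in> dom_pts k n" using meet_dom[OF xd yd] join_dom[OF xd yd] .
  have sub: "f x + f y \<ge> f ?m + f ?j" using ks xd yd by (auto simp: k_submodular_def)
  have fxy: "f x = f y" using x y xd yd by (force simp: minimisers_def)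
  have mx: "f x \<le> f ?m" "f x \<le> f ?j" using x md jd by (auto simp: minimisers_def)
  have mm: "f ?m \<le> f z" "f ?j \<le> f z" if "z \<in> dom_pts k n" for z
    using that x sub fxy mx by (auto simp: minimisers_def)
  show ?thesis using mm md jd by (auto simp: minimisers_def)
qed

lemma dd_pointwise:
  assumes "a \<noteq> 0" "b \<noteq> 0" "c \<noteq> 0"
  shows "kjoin (kmeet a b) (kjoin c (kmeet a b)) = (if a = b then a else c)"
  using assms by (auto simp: kmeet_def kjoin_def)

lemma dd_closed:
  assumes ks: "k_submodular k n f"
    and x: "x \<in> minimisers k n f \<inter> int_pts k n"
    and y: "y \<in> minimisers k n f \<inter> int_pts k n"
    and z: "z \<in> minimisers k n f \<inter> int_pts k n"
  shows "dd x y z \<in> minimisers k n f \<inter> int_pts k n"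
proof -
  let ?s = "\<lambda>i. kmeet (x i) (y i)"
  let ?t = "\<lambda>i. kjoin (z i) (?s i)"
  let ?u = "\<lambda>i. kjoin (?s i) (?t i)"
  have s: "?s \<in> minimisers k n f" using min_closed[OF ks, of x y] x y by blast
  have t: "?t \<in> minimisers k n f" using min_closed[OF ks, of z ?s] z s by blast
  have u: "?u \<in> minimisers k n f" using min_closed[OF ks, of ?s ?t] s t by blast
  have eq: "?u = dd x y z"
  proof
    fix i
    show "?u i = dd x y z i"
    proof (cases "i < n")
      case True
      then have "x i \<noteq> 0" "y i \<noteq> 0" "z i \<noteq> 0" using x y z by (auto simp: int_pts_def)
      then show ?thesis using dd_pointwise by (simp add: dd_def)
    next
      case False
      then have "x i = 0" "y i = 0" "z i = 0" using x y z by (auto simp: int_pts_def)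
      then show ?thesis by (simp add: dd_def kmeet_def kjoin_def)
    qed
  qed
  have "dd x y z \<in> int_pts k n" using x z by (auto simp: int_pts_def dd_def)
  then show ?thesis using u eq by simp
qed

lemma finite_int: "finite (int_pts k n)"
proof -
  have "int_pts k n \<subseteq> {g. \<forall>i. (i \<in> {..<n} \<longrightarrow> g i \<in> {0..k}) \<and> (i \<notin> {..<n} \<longrightarrow> g i = 0)}"
    by (auto simp: int_pts_def)
  moreover have "finite {g. \<forall>i. (i \<in> {..<n} \<longrightarrow> g i \<in> {0..k}) \<and> (i \<notin> {..<n} \<longrightarrow> (g::nat\<Rightarrow>nat) i = 0)}"
    by (rule finite_set_of_finite_funs) auto
  ultimately show ?thesis by (rule finite_subset)
qed

lemma key:
  assumes ks: "k_submodular k n f"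
    and xI: "x \<in> int_pts k n" and xR: "x \<notin> minimisers k n f \<inter> int_pts k n"
  shows "\<exists>c. constr_wf k n c \<and> (\<forall>r\<in>minimisers k n f \<inter> int_pts k n. constr_sat c r) \<and> \<not> constr_sat c x"
proof -
  define R where "R = minimisers k n f \<inter> int_pts k n"
  have cl: "\<And>x y z. x\<in>R \<Longrightarrow> y\<in>R \<Longrightarrow> z\<in>R \<Longrightarrow> dd x y z \<in> R"
    unfolding R_def using dd_closed[OF ks] by blast
  have xR': "x \<notin> R" using xR R_def by simp
  show ?thesis
  proof (cases "\<exists>i<n. \<forall>r\<in>R. r i \<noteq> x i")
    case True
    then obtain i where i: "i < n" "\<forall>r\<in>R. r i \<noteq> x i" by blast
    have "constr_wf k n (Unary i ((\<lambda>r. r i) ` R))" using i by simp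
    moreover have "\<forall>r\<in>R. constr_sat (Unary i ((\<lambda>r. r i) ` R)) r" by simp
    moreover have "\<not> constr_sat (Unary i ((\<lambda>r. r i) ` R)) x" using i by auto
    ultimately show ?thesis unfolding R_def[symmetric] by blast
  next
    case unF: False
    have ne: "R \<noteq> {}"
    proof (cases "n = 0")
      case True
      have xd: "x \<in> dom_pts k n" using xI by (auto simp: int_pts_def dom_pts_def)
      have yx: "y = x" if y: "y \<in> dom_pts k n" for y
      proof
        fix i
        have "y i = 0" using y True by (simp add: dom_pts_def)
        moreover have "x i = 0" using xI True by (simp add: int_pts_def)
        ultimately show "y i = x i" by simp
      qed
      have "\<forall>y\<in>dom_pts k n. f x \<le> f y" using yx by (metis order_refl)
      then have "x \<in> minimisers k n f" unfolding minimisers_def using xd by blast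
      then have False using xI xR by simp
      then show ?thesis by (rule FalseE)
    next
      case False
      then have "0 < n" by simp
      then show ?thesis using unF by blast
    qed
    show ?thesis
    proof (cases "\<forall>i j. i<n \<longrightarrow> j<n \<longrightarrow> (\<exists>r\<in>R. r i = x i \<and> r j = x j)")
      case True
      obtain r where r: "r \<in> R" "\<forall>i\<in>{..<n}. r i = x i"
        using decomp[of R n x "{..<n}", OF cl ne] True by blast
      have "r \<in> int_pts k n" using r R_def by simp
      then have rI: "r \<in> int_pts k n" .
      have "r = x"
      proof
        fix i
        show "r i = x i"
        proof (cases "i < n")
          case True then show ?thesis using r(2) by simp
        next
          case False then show ?thesis using rI xI by (simp add: int_pts_def)
        qed
      qed
      then show ?thesis using r xR' by simp
    next
      case False
      then obtain i j where ij: "i < n" "j < n" "\<not>(\<exists>r\<in>R. r i = x i \<and> r j = x j)" by blast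
      define Q where "Q = (\<lambda>r. (r i, r j)) ` R"
      have RI: "R \<subseteq> int_pts k n" using R_def by simp
      have Qk: "Q \<subseteq> {1..k}\<times>{1..k}" using RI ij unfolding Q_def by (auto simp: int_pts_def)
      have clQ: "(if c1 = c2 then c1 else c3, if e1 = e2 then e1 else e3) \<in> Q"
        if H: "(c1,e1)\<in>Q" "(c2,e2)\<in>Q" "(c3,e3)\<in>Q" for c1 e1 c2 e2 c3 e3
      proof -
        obtain r1 where r1: "r1 \<in> R" "c1 = r1 i" "e1 = r1 j" using H(1) unfolding Q_def by blast
        obtain r2 where r2: "r2 \<in> R" "c2 = r2 i" "e2 = r2 j" using H(2) unfolding Q_def by blast
        obtain r3 where r3: "r3 \<in> R" "c3 = r3 i" "e3 = r3 j" using H(3) unfolding Q_def by blast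
        have "dd r1 r2 r3 \<in> R" using cl r1 r2 r3 by blast
        then have "(dd r1 r2 r3 i, dd r1 r2 r3 j) \<in> Q" unfolding Q_def by blast
        moreover have "(dd r1 r2 r3 i, dd r1 r2 r3 j) = (if c1 = c2 then c1 else c3, if e1 = e2 then e1 else e3)"
          unfolding dd_def r1(2,3) r2(2,3) r3(2,3) by simp
        ultimately show ?thesis by metis
      qed
      have a: "x i \<in> fst ` Q"
      proof -
        obtain r where rr: "r \<in> R" "r i = x i" using unF ij(1) by blast
        have "(x i, r j) \<in> Q" unfolding Q_def by (rule image_eqI[of _ _ r]) (simp_all add: rr)
        then show ?thesis by (metis fst_conv image_eqI)
      qed
      have b: "x j \<in> snd ` Q"
      proof -
        obtain r where rr: "r \<in> R" "r j = x j" using unF ij(2) by blast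
        have "(r i, x j) \<in> Q" unfolding Q_def by (rule image_eqI[of _ _ r]) (simp_all add: rr)
        then show ?thesis by (metis snd_conv image_eqI)
      qed
      have nab: "(x i, x j) \<notin> Q"
      proof
        assume "(x i, x j) \<in> Q"
        then obtain r where "(x i, x j) = (r i, r j)" "r \<in> R" unfolding Q_def by (rule imageE)
        then show False using ij(3) by auto
      qed
      have disj: "(\<exists>a0\<in>{1..k}. \<exists>b0\<in>{1..k}. a0\<noteq>x i \<and> b0\<noteq>x j \<and> (\<forall>(c,e)\<in>Q. c=a0 \<or> e=b0))
     \<or> (\<exists>\<pi>. bij_betw \<pi> {1..k} {1..k} \<and> \<pi> (x j) \<noteq> x i \<and> (\<forall>(c,e)\<in>Q. c = \<pi> e))"
        apply (rule binary[OF Qk _ a b nab])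
        apply (rule clQ)
        apply assumption+
        done
      from disj show ?thesis
      proof (elim disjE exE bexE conjE)
        fix a0 b0 assume h: "a0 \<in> {1..k}" "b0 \<in> {1..k}" "a0 \<noteq> x i" "b0 \<noteq> x j"
          "\<forall>(c,e)\<in>Q. c=a0 \<or> e=b0"
        have "constr_wf k n (Disj i j a0 b0)" using h ij by simp
        moreover have "\<forall>r\<in>R. constr_sat (Disj i j a0 b0) r"
        proof
          fix r assume "r \<in> R"
          then have "(r i, r j) \<in> Q" unfolding Q_def by (rule imageI)
          then have "r i = a0 \<or> r j = b0" using h(5) by blast
          then show "constr_sat (Disj i j a0 b0) r" by simp
        qed
        moreover have "\<not> constr_sat (Disj i j a0 b0) x" using h by auto
        ultimately show ?thesis unfolding R_def[symmetric] by blast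
      next
        fix \<pi> assume h: "bij_betw \<pi> {1..k} {1..k}" "\<pi> (x j) \<noteq> x i" "\<forall>(c,e)\<in>Q. c = \<pi> e"
        have "constr_wf k n (PermC i j \<pi>)" using h ij by simp
        moreover have "\<forall>r\<in>R. constr_sat (PermC i j \<pi>) r"
        proof
          fix r assume "r \<in> R"
          then have "(r i, r j) \<in> Q" unfolding Q_def by (rule imageI)
          then have "r i = \<pi> (r j)" using h(3) by blast
          then show "constr_sat (PermC i j \<pi>) r" by simp
        qed
        moreover have "\<not> constr_sat (PermC i j \<pi>) x" using h by auto
        ultimately show ?thesis unfolding R_def[symmetric] by blast
      qed
    qed
  qed
qed

theorem lemma4:
  fixes k n :: nat and f :: "(nat \<Rightarrow> nat) \<Rightarrow> real"
  assumes "k \<ge> 2"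
    and "k_submodular k n f"
  shows "\<exists>cs :: constr list. (\<forall>c\<in>set cs. constr_wf k n c) \<and>
           minimisers k n f \<inter> int_pts k n = {x \<in> int_pts k n. \<forall>c\<in>set cs. constr_sat c x}"
proof -
  define R where "R = minimisers k n f \<inter> int_pts k n"
  define P where "P x c \<longleftrightarrow> constr_wf k n c \<and> (\<forall>r\<in>R. constr_sat c r) \<and> \<not> constr_sat c x" for x c
  have ex: "\<forall>x\<in>int_pts k n - R. \<exists>c. P x c"
  proof
    fix x assume "x \<in> int_pts k n - R"
    then have "x \<in> int_pts k n" "x \<notin> minimisers k n f \<inter> int_pts k n" unfolding R_def by blast+
    from key[OF assms(2) this] show "\<exists>c. P x c" unfolding P_def R_def .
  qed
  from bchoice[OF ex] obtain C where C: "\<forall>x\<in>int_pts k n - R. P x (C x)" by blast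
  have "finite (C ` (int_pts k n - R))" by (intro finite_imageI finite_Diff finite_int)
  from finite_list[OF this] obtain cs where cs: "set cs = C ` (int_pts k n - R)" by (elim exE)
  have wf: "\<forall>c\<in>set cs. constr_wf k n c"
  proof
    fix c assume "c \<in> set cs"
    then obtain x where "x \<in> int_pts k n - R" "c = C x" using cs by blast
    then show "constr_wf k n c" using C unfolding P_def by blast
  qed
  have eq: "R = {x \<in> int_pts k n. \<forall>c\<in>set cs. constr_sat c x}"
  proof
    show "R \<subseteq> {x \<in> int_pts k n. \<forall>c\<in>set cs. constr_sat c x}"
    proof
      fix r assume r: "r \<in> R"
      have "constr_sat c r" if "c \<in> set cs" for c
      proof -
        obtain x where "x \<in> int_pts k n - R" "c = C x" using cs \<open>c \<in> set cs\<close> by blast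
        then show ?thesis using C r unfolding P_def by blast
      qed
      moreover have "r \<in> int_pts k n" using r R_def by simp
      ultimately show "r \<in> {x \<in> int_pts k n. \<forall>c\<in>set cs. constr_sat c x}" by blast
    qed
    show "{x \<in> int_pts k n. \<forall>c\<in>set cs. constr_sat c x} \<subseteq> R"
    proof
      fix x assume x: "x \<in> {x \<in> int_pts k n. \<forall>c\<in>set cs. constr_sat c x}"
      show "x \<in> R"
      proof (rule ccontr)
        assume "x \<notin> R"
        then have xd: "x \<in> int_pts k n - R" using x by simp
        then have "C x \<in> set cs" using cs by simp
        moreover have "\<not> constr_sat (C x) x" using C xd unfolding P_def by blast
        ultimately show False using x by blast
      qed
    qed
  qed
  show ?thesis using wf eq unfolding R_def[symmetric] by blast
qed

end
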